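(* Let $(Y,\rho_Y)$ be a complete separable metric space, $I$ a finite set, $X=Y\times I$, $\bar X=X\times[0,\infty)$. Let $\{\pi_{ij}\}_{i,j\in I}$ be a right stochastic matrix, $\{S_i\}_{i\in I}$ jointly continuous semiflows $S_i:[0,\infty)\times Y\to Y$, $J$ a stochastic kernel on $Y$, and $\lambda>0$. Define the stochastic kernel $\bar P$ on $\bar X$ by $$\bar P((y,i,s),\bar A)=\sum_{j\in I}\pi_{ij}\int_0^\infty\lambda e^{-\lambda t}\int_Y\mathbb{1}_{\bar A}(u,j,t+s)\,J(S_i(t,y),du)\,dt.$$ Fix $y^*\in Y$ and put $V(y,i)=\rho_Y(y,y^* )$. Assume: (S1') there exist $M\geq0$, $\zeta\geq0$ with $\max_{i\in I}\rho_Y(S_i(t,y^* ),y^* )\leq Mt^\zeta$ for all $t\geq0$; (S2') there exists $L>0$ with $\rho_Y(S_i(t,y_1),S_i(t,y_2))\leq L\rho_Y(y_1,y_2)$ for all $t\geq0$, $y_1,y_2\in Y$, $i\in I$; (J1') there exist $a>0$, $b\geq0$ with $\int_Y\rho_Y^2(u,y^* )\,J(y,du)\leq a\rho_Y^2(y,y^* )+b$ for all $y\in Y$; and $2aL^2<1$. Then there exist constants $\Gamma>0$ and $C\geq0$ such that for every $t_0\geq0$ and the function $U_{t_0}:\bar X\to[0,\infty)$, $U_{t_0}(x,t)=e^{-\lambda(t_0-t)}V^2(x)\mathbb{1}_{[0,t_0]}(t)$, we have $$\sum_{n=0}^\infty\bar P^nU_{t_0}(x,0)\leq e^{-\Gamma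 t_0}V^2(x)+C\quad\text{for all }x\in X.$$
   Context: A semiflow satisfies $S_i(s,S_i(t,y))=S_i(s+t,y)$ and $S_i(0,y)=y$. $\bar P^n$ denotes the $n$-th iterate of the kernel ($\bar P^0$ the identity), acting on nonnegative Borel $f$ by $\bar P^nf(\bar x)=\int f\,d\bar P^n(\bar x,\cdot)$. *)

theory Defs
  imports "HOL-Probability.Probability"
begin

text \<open>The kernel Pbar on Xbar = (Y x I) x [0,inf), given by its action on
nonnegative functions; its n-th iterate acting on f is (Pbar ^^ n) f.\<close>

definition Pbar ::
  "('i::finite \<Rightarrow> 'i \<Rightarrow> real) \<Rightarrow> ('i \<Rightarrow> real \<Rightarrow> 'y \<Rightarrow> 'y) \<Rightarrow> ('y \<Rightarrow> 'y measure) \<Rightarrow> real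
   \<Rightarrow> ((('y \<times> 'i) \<times> real) \<Rightarrow> ennreal) \<Rightarrow> (('y \<times> 'i) \<times> real) \<Rightarrow> ennreal" where
  "Pbar \<pi> S J lam f = (\<lambda>((y, i), s).
     (\<Sum>j\<in>UNIV. ennreal (\<pi> i j) *
        (\<integral>\<^sup>+ t\<in>{0..}. ennreal (lam * exp (- lam * t)) *
            (\<integral>\<^sup>+ u. f ((u, j), t + s) \<partial>(J (S i t y))) \<partial>lborel)))"

definition semiflow :: "(real \<Rightarrow> 'y \<Rightarrow> 'y) \<Rightarrow> bool" where
  "semiflow T \<longleftrightarrow> (\<forall>y. T 0 y = y) \<and>
     (\<forall>s t y. 0 \<le> s \<longrightarrow> 0 \<le> t \<longrightarrow> T s (T t y) = T (s + t) y)"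

definition Ufun :: "real \<Rightarrow> real \<Rightarrow> 'y::metric_space \<Rightarrow> (('y \<times> 'i) \<times> real) \<Rightarrow> ennreal" where
  "Ufun lam t0 ystar = (\<lambda>((y, i), t).
      ennreal (exp (- lam * (t0 - t)) * (dist y ystar)\<^sup>2 * indicator {0..t0} t))"

end

theory Submission imports Defs begin

lemma pow_le_exp: fixes x::real assumes "0 \<le> x" shows "x ^ k / fact k \<le> exp x"
proof -
  have s: "summable (\<lambda>n. x ^ n / fact n)" using summable_exp[of x] by (simp add: divide_inverse mult.commute)
  have "x ^ k / fact k = (\<Sum>n\<in>{k}. x ^ n / fact n)" by simp
  also have "\<dots> \<le> (\<Sum>n. x ^ n / fact n)"
    by (rule sum_le_suminf[OF s]) (use assms in auto)
  also have "\<dots> = exp x" by (simp add: exp_def divide_inverse mult.commute)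
  finally show ?thesis .
qed

lemma powr_le_exp: fixes p d :: real assumes "0 \<le> p" "0 < d"
  shows "\<exists>C>0. \<forall>t\<ge>0. t powr p \<le> C * exp (d * t)"
proof -
  define k where "k = nat \<lceil>p\<rceil>"
  have pk: "p \<le> real k" unfolding k_def by linarith
  define C where "C = 1 + fact k / d ^ k"
  have "t powr p \<le> C * exp (d * t)" if t: "t \<ge> 0" for t
  proof (cases "t \<le> 1")
    case True
    have "t powr p \<le> 1" using True t assms by (cases "t = 0") (auto intro: powr_le1)
    also have "1 \<le> C * exp (d*t)"
    proof -
      have "1 \<le> C" unfolding C_def using assms by simp
      moreover have "1 \<le> exp (d*t)" using assms t by simp
      ultimately show ?thesis by (metis mult_mono order.trans mult_1_left zero_le_one)
    qed
    finally show ?thesis .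
  next
    case False
    then have "t powr p \<le> t powr (real k)" using pk by (intro powr_mono) auto
    also have "\<dots> = t ^ k" using t False by (simp add: powr_realpow)
    also have "t ^ k = fact k / d ^ k * ((d*t) ^ k / fact k)" using assms by (simp add: power_mult_distrib)
    also have "\<dots> \<le> fact k / d ^ k * exp (d*t)"
      by (intro mult_left_mono pow_le_exp) (use assms t in auto)
    also have "\<dots> \<le> C * exp (d*t)" unfolding C_def by (intro mult_right_mono) auto
    finally show ?thesis .
  qed
  moreover have "C > 0" unfolding C_def using assms by (simp add: add_pos_nonneg)
  ultimately show ?thesis by blast
qed

lemma nn_superadd: "integral\<^sup>N M f + integral\<^sup>N M g \<le> (\<integral>\<^sup>+x. f x + g x \<partial>M)"
proof -
  let ?A = "{u. simple_function M u \<and> u \<le> f}" and ?B = "{v. simple_function M v \<and> v \<le> g}"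
  have ne: "?A \<noteq> {}" "?B \<noteq> {}" by (auto intro!: exI[of _ "\<lambda>_. 0"] simp: le_fun_def)
  have *: "integral\<^sup>S M u + integral\<^sup>S M v \<le> (\<integral>\<^sup>+x. f x + g x \<partial>M)" if "u \<in> ?A" "v \<in> ?B" for u v
  proof -
    have "integral\<^sup>S M u + integral\<^sup>S M v = (\<integral>\<^sup>Sx. u x + v x \<partial>M)"
      using that by (subst simple_integral_add) auto
    also have "\<dots> \<le> (\<integral>\<^sup>+x. f x + g x \<partial>M)" unfolding nn_integral_def
      by (rule SUP_upper) (use that in \<open>auto simp: le_fun_def intro: add_mono\<close>)
    finally show ?thesis .
  qed
  have "(SUP u\<in>?A. integral\<^sup>S M u) + (SUP v\<in>?B. integral\<^sup>S M v)
      = (SUP u\<in>?A. integral\<^sup>S M u + (SUP v\<in>?B. integral\<^sup>S M v))"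
    by (rule ennreal_SUP_add_left[symmetric, OF ne(1)])
  also have "\<dots> \<le> (\<integral>\<^sup>+x. f x + g x \<partial>M)"
  proof (rule SUP_least)
    fix u assume u: "u \<in> ?A"
    have "integral\<^sup>S M u + (SUP v\<in>?B. integral\<^sup>S M v) = (SUP v\<in>?B. integral\<^sup>S M u + integral\<^sup>S M v)"
      by (rule ennreal_SUP_add_right[OF ne(2)])
    also have "\<dots> \<le> (\<integral>\<^sup>+x. f x + g x \<partial>M)"
      by (rule SUP_least) (rule *[OF u])
    finally show "integral\<^sup>S M u + (SUP v\<in>?B. integral\<^sup>S M v) \<le> (\<integral>\<^sup>+x. f x + g x \<partial>M)" .
  qed
  finally show ?thesis unfolding nn_integral_def[of M f] nn_integral_def[of M g] .
qed

lemma Pbar_mono: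
  assumes "\<And>z. f z \<le> g z"
  shows "Pbar \<pi> S J lam f x \<le> Pbar \<pi> S J lam g x"
proof -
  obtain y i s where x: "x = ((y, i), s)" by (metis prod.collapse)
  show ?thesis unfolding x Pbar_def
    by (auto intro!: sum_mono mult_left_mono nn_integral_mono mult_right_mono assms)
qed

lemma Pbar_superadd:
  "Pbar \<pi> S J lam f x + Pbar \<pi> S J lam g x \<le> Pbar \<pi> S J lam (\<lambda>z. f z + g z) x"
proof -
  obtain y i s where x: "x = ((y, i), s)" by (metis prod.collapse)
  have "(\<integral>\<^sup>+ t\<in>{0..}. ennreal (lam * exp (- lam * t)) * (\<integral>\<^sup>+ u. f ((u, j), t + s) \<partial>(J (S i t y))) \<partial>lborel)
      + (\<integral>\<^sup>+ t\<in>{0..}. ennreal (lam * exp (- lam * t)) * (\<integral>\<^sup>+ u. g ((u, j), t + s) \<partial>(J (S i t y))) \<partial>lborel)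
      \<le> (\<integral>\<^sup>+ t\<in>{0..}. ennreal (lam * exp (- lam * t)) * (\<integral>\<^sup>+ u. f ((u, j), t + s) + g ((u, j), t + s) \<partial>(J (S i t y))) \<partial>lborel)"
    for j
  proof -
    let ?c = "\<lambda>t. ennreal (lam * exp (- lam * t))"
    have "(\<integral>\<^sup>+ t\<in>{0..}. ?c t * (\<integral>\<^sup>+ u. f ((u, j), t + s) \<partial>(J (S i t y))) \<partial>lborel)
      + (\<integral>\<^sup>+ t\<in>{0..}. ?c t * (\<integral>\<^sup>+ u. g ((u, j), t + s) \<partial>(J (S i t y))) \<partial>lborel)
      \<le> (\<integral>\<^sup>+ t. ?c t * (\<integral>\<^sup>+ u. f ((u, j), t + s) \<partial>(J (S i t y))) * indicator {0..} t
             + ?c t * (\<integral>\<^sup>+ u. g ((u, j), t + s) \<partial>(J (S i t y))) * indicator {0..} t \<partial>lborel)"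
      by (rule nn_superadd)
    also have "\<dots> \<le> (\<integral>\<^sup>+ t\<in>{0..}. ?c t * (\<integral>\<^sup>+ u. f ((u, j), t + s) + g ((u, j), t + s) \<partial>(J (S i t y))) \<partial>lborel)"
    proof (rule nn_integral_mono)
      fix t
      have "?c t * (\<integral>\<^sup>+ u. f ((u, j), t + s) \<partial>(J (S i t y))) * indicator {0..} t
             + ?c t * (\<integral>\<^sup>+ u. g ((u, j), t + s) \<partial>(J (S i t y))) * indicator {0..} t
          = ?c t * ((\<integral>\<^sup>+ u. f ((u, j), t + s) \<partial>(J (S i t y))) + (\<integral>\<^sup>+ u. g ((u, j), t + s) \<partial>(J (S i t y)))) * indicator {0..} t"
        by (simp add: algebra_simps)
      also have "\<dots> \<le> ?c t * (\<integral>\<^sup>+ u. f ((u, j), t + s) + g ((u, j), t + s) \<partial>(J (S i t y))) * indicator {0..} t"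
        by (intro mult_right_mono mult_left_mono nn_superadd) auto
      finally show "?c t * (\<integral>\<^sup>+ u. f ((u, j), t + s) \<partial>(J (S i t y))) * indicator {0..} t
             + ?c t * (\<integral>\<^sup>+ u. g ((u, j), t + s) \<partial>(J (S i t y))) * indicator {0..} t
          \<le> ?c t * (\<integral>\<^sup>+ u. f ((u, j), t + s) + g ((u, j), t + s) \<partial>(J (S i t y))) * indicator {0..} t" .
    qed
    finally show ?thesis .
  qed
  then show ?thesis unfolding x Pbar_def
    by (auto simp: sum.distrib[symmetric] distrib_left[symmetric] intro!: sum_mono mult_left_mono)
qed

lemma Pbar_sum:
  fixes N :: nat shows "(\<Sum>n<N. Pbar \<pi> S J lam (h n) x) \<le> Pbar \<pi> S J lam (\<lambda>z. \<Sum>n<N. h n z) x"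
proof (induction N)
  case 0 then show ?case by simp
next
  case (Suc N)
  have "(\<Sum>n<Suc N. Pbar \<pi> S J lam (h n) x) = (\<Sum>n<N. Pbar \<pi> S J lam (h n) x) + Pbar \<pi> S J lam (h N) x"
    by simp
  also have "\<dots> \<le> Pbar \<pi> S J lam (\<lambda>z. \<Sum>n<N. h n z) x + Pbar \<pi> S J lam (h N) x"
    using Suc by (rule add_right_mono)
  also have "\<dots> \<le> Pbar \<pi> S J lam (\<lambda>z. (\<Sum>n<N. h n z) + h N z) x"
    by (rule Pbar_superadd)
  finally show ?case by simp
qed

lemma partial_le:
  assumes key: "\<And>z. U z + Pbar \<pi> S J lam F z \<le> F z"
  shows "(\<Sum>n<N. ((Pbar \<pi> S J lam) ^^ n) U z) \<le> F z"
proof (induction N arbitrary: z)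
  case 0 then show ?case by simp
next
  case (Suc N)
  have "(\<Sum>n<Suc N. ((Pbar \<pi> S J lam) ^^ n) U z) = U z + (\<Sum>n<N. Pbar \<pi> S J lam (((Pbar \<pi> S J lam) ^^ n) U) z)"
    by (simp add: sum.lessThan_Suc_shift del: sum.lessThan_Suc)
  also have "\<dots> \<le> U z + Pbar \<pi> S J lam (\<lambda>w. \<Sum>n<N. ((Pbar \<pi> S J lam) ^^ n) U w) z"
    by (intro add_left_mono Pbar_sum)
  also have "\<dots> \<le> U z + Pbar \<pi> S J lam F z"
    by (intro add_left_mono Pbar_mono Suc)
  also have "\<dots> \<le> F z" by (rule key)
  finally show ?case .
qed

lemma real_part:
  fixes a L M zeta C1 d b q W t Wz :: real
  assumes "0 \<le> a" "0 \<le> L" "0 \<le> M" "0 \<le> t" "0 \<le> b" "0 \<le> d"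
    and "Wz = dz\<^sup>2" "0 \<le> dz" "dz \<le> L * dy + M * t powr zeta" "0 \<le> dy"
    and "t powr (2*zeta) \<le> C1 * exp (d * t)" "q = 2*a*L\<^sup>2" "zeta \<ge> 0"
  shows "a * Wz + b \<le> q * dy\<^sup>2 + (2*a*M\<^sup>2*C1 + b) * exp (d*t)"
proof -
  have "dz\<^sup>2 \<le> (L * dy + M * t powr zeta)\<^sup>2"
    using assms by (intro power_mono) auto
  also have "\<dots> \<le> 2 * L\<^sup>2 * dy\<^sup>2 + 2 * M\<^sup>2 * (t powr zeta)\<^sup>2"
  proof -
    have "\<And>X Y::real. 2*X\<^sup>2+2*Y\<^sup>2 - (X+Y)\<^sup>2 = (X-Y)\<^sup>2" by (simp add: power2_eq_square algebra_simps)
    then have "\<And>X Y::real. (X+Y)\<^sup>2 \<le> 2*X\<^sup>2+2*Y\<^sup>2" by (smt (verit) zero_le_power2)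
    from this[of "L*dy" "M * t powr zeta"] show ?thesis by (simp add: power_mult_distrib)
  qed
  also have "(t powr zeta)\<^sup>2 = t powr (2*zeta)"
    using assms by (simp add: powr_powr[symmetric] power2_eq_square powr_add[symmetric])
  finally have "dz\<^sup>2 \<le> 2 * L\<^sup>2 * dy\<^sup>2 + 2 * M\<^sup>2 * (C1 * exp (d*t))"
    using assms(11) mult_left_mono[OF assms(11), of "2*M\<^sup>2"] by simp
  then have "a * Wz \<le> a * (2 * L\<^sup>2 * dy\<^sup>2 + 2 * M\<^sup>2 * (C1 * exp (d*t)))"
    using assms by (intro mult_left_mono) auto
  moreover have "b * 1 \<le> b * exp (d*t)" using assms by (intro mult_left_mono) auto
  ultimately show ?thesis using assms by (simp add: algebra_simps)
qed

lemma ftc3: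
  fixes A1 A2 A3 c1 c2 c3 tau :: real
  assumes c: "c1 > 0" "c2 > 0" "c3 > 0" and tau: "tau \<ge> 0"
    and nn: "\<And>t. t \<in> {0..tau} \<Longrightarrow> 0 \<le> A1 * exp (- c1 * t) + A2 * exp (- c2 * t) + A3 * exp (- c3 * t)"
  shows "(\<integral>\<^sup>+t. ennreal (A1 * exp (- c1 * t) + A2 * exp (- c2 * t) + A3 * exp (- c3 * t)) * indicator {0..tau} t \<partial>lborel)
    = ennreal (A1 / c1 * (1 - exp (- c1 * tau)) + A2 / c2 * (1 - exp (- c2 * tau)) + A3 / c3 * (1 - exp (- c3 * tau)))"
proof -
  define G where "G t = - A1 / c1 * exp (- c1 * t) - A2 / c2 * exp (- c2 * t) - A3 / c3 * exp (- c3 * t)" for t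
  have "(\<integral>\<^sup>+t. ennreal (A1 * exp (- c1 * t) + A2 * exp (- c2 * t) + A3 * exp (- c3 * t)) * indicator {0..tau} t \<partial>lborel)
     = ennreal (G tau - G 0)"
  proof (rule nn_integral_FTC_Icc)
    show "(\<lambda>t. A1 * exp (- c1 * t) + A2 * exp (- c2 * t) + A3 * exp (- c3 * t)) \<in> borel_measurable borel"
      by measurable
    fix t assume "t \<in> {0..tau}"
    show "(G has_real_derivative A1 * exp (- c1 * t) + A2 * exp (- c2 * t) + A3 * exp (- c3 * t)) (at t)"
      unfolding G_def using c
      by (auto intro!: derivative_eq_intros simp: field_simps)
  qed (use nn tau in auto)
  also have "G tau - G 0 = A1 / c1 * (1 - exp (- c1 * tau)) + A2 / c2 * (1 - exp (- c2 * tau)) + A3 / c3 * (1 - exp (- c3 * tau))"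
    unfolding G_def by (simp add: algebra_simps)
  finally show ?thesis .
qed

lemma ennreal_add_le_aux:
  fixes x y z :: real
  assumes "0 \<le> x" "x \<le> z" "x + y \<le> z"
  shows "ennreal x + ennreal y \<le> ennreal z"
proof (cases "y \<ge> 0")
  case True
  then show ?thesis using assms by (simp add: ennreal_plus[symmetric] ennreal_leI del: ennreal_plus)
next
  case False
  then have "ennreal y = 0" by (simp add: ennreal_neg)
  then show ?thesis using assms by (simp add: ennreal_leI)
qed

theorem lemma5p1:
  fixes \<pi> :: "'i::finite \<Rightarrow> 'i \<Rightarrow> real"
    and S :: "'i \<Rightarrow> real \<Rightarrow> 'y::polish_space \<Rightarrow> 'y"
    and J :: "'y \<Rightarrow> 'y measure"
    and lam :: real and ystar :: 'y
    and M \<zeta> L a b :: real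
  assumes stoch: "\<And>i j. 0 \<le> \<pi> i j" "\<And>i. (\<Sum>j\<in>UNIV. \<pi> i j) = 1"
    and semiflow: "\<And>i. semiflow (S i)"
    and cont: "\<And>i. continuous_on ({0..} \<times> UNIV) (\<lambda>p. S i (fst p) (snd p))"
    and kernel: "J \<in> borel \<rightarrow>\<^sub>M prob_algebra borel"
    and lam: "lam > 0"
    and S1: "M \<ge> 0" "\<zeta> \<ge> 0" "\<And>t. t \<ge> 0 \<Longrightarrow> (MAX i\<in>UNIV. dist (S i t ystar) ystar) \<le> M * t powr \<zeta>"
    and S2: "L > 0" "\<And>i t y1 y2. t \<ge> 0 \<Longrightarrow> dist (S i t y1) (S i t y2) \<le> L * dist y1 y2"
    and J1: "a > 0" "b \<ge> 0"
      "\<And>y. (\<integral>\<^sup>+ u. ennreal ((dist u ystar)\<^sup>2) \<partial>(J y)) \<le> ennreal (a * (dist y ystar)\<^sup>2 + b)"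
    and small: "2 * a * L\<^sup>2 < 1"
  shows "\<exists>\<Gamma> C. \<Gamma> > 0 \<and> C \<ge> 0 \<and>
    (\<forall>t0 \<ge> 0. \<forall>y i.
       (\<Sum>n. ((Pbar \<pi> S J lam) ^^ n) (Ufun lam t0 ystar) ((y, i), 0))
         \<le> ennreal (exp (- \<Gamma> * t0) * (dist y ystar)\<^sup>2 + C))"
proof -
  define q where "q = 2 * a * L\<^sup>2"
  have q: "0 < q" "q < 1" using small J1 S2 by (auto simp: q_def)
  define g where "g = (1 - q) * lam"
  define d where "d = q * lam / 2"
  have g: "g > 0" using q lam by (simp add: g_def)
  have d: "d > 0" using q lam by (simp add: d_def)
  obtain C1 where C1: "C1 > 0" "\<And>t. t \<ge> 0 \<Longrightarrow> t powr (2*\<zeta>) \<le> C1 * exp (d * t)"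
    using powr_le_exp[of "2*\<zeta>" d] S1 d by auto
  define K2 where "K2 = 2*a*M\<^sup>2*C1 + b"
  have K2: "K2 \<ge> 0" using J1 C1 by (simp add: K2_def)
  define Kp where "Kp = lam * K2 / d"
  have Kp: "Kp \<ge> 0" using lam K2 d by (simp add: Kp_def)
  define B where "B = Kp / (1 - q)"
  define D where "D = q * B"
  have B0: "B \<ge> 0" using Kp q by (simp add: B_def)
  have B: "B \<ge> 0" "D \<ge> 0" "D \<le> B" using B0 q mult_right_mono[of q 1 B] by (auto simp: D_def)
  have Jz: "sets (J z) = sets borel" "prob_space (J z)" for z
    using measurable_space[OF kernel, of z] by (auto simp: space_prob_algebra)
  have Wmeas: "(\<lambda>u. ennreal ((dist u ystar)\<^sup>2)) \<in> borel_measurable (J z)" for z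
    unfolding measurable_cong_sets[OF Jz(1) refl] by measurable
  have mainb: "a * (dist (S i t y) ystar)\<^sup>2 + b \<le> q * (dist y ystar)\<^sup>2 + K2 * exp (d*t)"
    if t: "t \<ge> 0" for i t y
  proof -
    have "dist (S i t ystar) ystar \<le> (MAX i\<in>UNIV. dist (S i t ystar) ystar)"
      by (rule Max_ge) auto
    also have "\<dots> \<le> M * t powr \<zeta>" using S1(3) t .
    finally have 1: "dist (S i t ystar) ystar \<le> M * t powr \<zeta>" .
    have "dist (S i t y) ystar \<le> dist (S i t y) (S i t ystar) + dist (S i t ystar) ystar"
      by (rule dist_triangle)
    also have "\<dots> \<le> L * dist y ystar + M * t powr \<zeta>" using S2(2)[OF t, of i y ystar] 1 by linarith
    finally have 2: "dist (S i t y) ystar \<le> L * dist y ystar + M * t powr \<zeta>" .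
    show ?thesis unfolding K2_def
      by (rule real_part[OF _ _ _ t _ _ refl _ 2 _ C1(2)[OF t]]) (use J1 S1 S2 d in \<open>auto simp: q_def\<close>)
  qed
  show ?thesis
  proof (intro exI conjI allI impI)
    show "g > 0" by (fact g)
    show "B \<ge> 0" by (fact B)
    fix t0 :: real and y i assume t0: "t0 \<ge> 0"
    define F where "F = (\<lambda>((y::'y, i::'i), s::real). ennreal (indicator {..t0} s *
        (exp (- g * (t0 - s)) * (dist y ystar)\<^sup>2 + B - D * exp (- g * (t0 - s)))))"
    have key: "Ufun lam t0 ystar z + Pbar \<pi> S J lam F z \<le> F z" for z
    proof -
      obtain y i s where z: "z = ((y, i), s)" by (metis prod.collapse)
      define tau where "tau = t0 - s"
      define W where "W = (dist y ystar)\<^sup>2"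
      show ?thesis
      proof (cases "tau < 0")
        case True
        have U0: "Ufun lam t0 ystar z = 0" using True unfolding z Ufun_def tau_def
          by (auto split: split_indicator)
        have F0: "F z = 0" using True unfolding z F_def tau_def
          by (auto split: split_indicator)
        have "(ennreal (lam * exp (- lam * t)) * (\<integral>\<^sup>+ u. F ((u, j), t + s) \<partial>(J (S i t y)))) * indicator {0..} t = 0"
          for j t
        proof (cases "t \<ge> 0")
          case True
          then have "\<And>u. F ((u, j), t + s) = 0" using \<open>tau < 0\<close> unfolding F_def tau_def
            by (auto split: split_indicator)
          then show ?thesis by simp
        qed (simp split: split_indicator)
        then have int0: "(\<integral>\<^sup>+t\<in>{0..}. ennreal (lam * exp (- lam * t)) * (\<integral>\<^sup>+ u. F ((u, j), t + s) \<partial>(J (S i t y))) \<partial>lborel) = 0" for j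
          by (simp only:) simp
        have "Pbar \<pi> S J lam F z = 0" unfolding z Pbar_def by (simp only: prod.case int0) simp
        then show ?thesis using U0 F0 by simp
      next
        case False
        then have tau0: "tau \<ge> 0" by simp
        have W0: "W \<ge> 0" by (simp add: W_def)
        have inner: "(\<integral>\<^sup>+u. F ((u, j), t + s) \<partial>(J (S i t y)))
            \<le> ennreal (indicator {..tau} t * (exp (- g * (tau - t)) * (q * W + K2 * exp (d * t)) + B - D * exp (- g * (tau - t))))"
          if t: "t \<ge> 0" for j t
        proof (cases "t \<le> tau")
          case False
          then have "\<And>u. F ((u, j), t + s) = 0" unfolding F_def tau_def by (auto split: split_indicator)
          then show ?thesis by simp
        next
          case True
          define e where "e = exp (- g * (tau - t))"
          define c where "c = B - D * e"
          have e: "0 \<le> e" "e \<le> 1" using True g by (auto simp: e_def)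
          have c: "c \<ge> 0" using B e mult_left_mono[of e 1 D] by (simp add: c_def)
          have Feq: "F ((u, j), t + s) = ennreal e * ennreal ((dist u ystar)\<^sup>2) + ennreal c" for u
          proof -
            have "F ((u, j), t + s) = ennreal (e * (dist u ystar)\<^sup>2 + c)"
              using True unfolding F_def e_def c_def tau_def by (simp add: algebra_simps)
            also have "\<dots> = ennreal e * ennreal ((dist u ystar)\<^sup>2) + ennreal c"
              using e c by (simp add: ennreal_plus ennreal_mult)
            finally show ?thesis .
          qed
          have "(\<integral>\<^sup>+u. F ((u, j), t + s) \<partial>(J (S i t y)))
              = (\<integral>\<^sup>+u. ennreal e * ennreal ((dist u ystar)\<^sup>2) + ennreal c \<partial>(J (S i t y)))"
            by (simp add: Feq)
          also have "\<dots> = ennreal e * (\<integral>\<^sup>+u. ennreal ((dist u ystar)\<^sup>2) \<partial>(J (S i t y))) + ennreal c"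
            by (subst nn_integral_add)
               (auto simp: Wmeas nn_integral_cmult prob_space.emeasure_space_1[OF Jz(2)] intro!: borel_measurable_times_ennreal)
          also have "\<dots> \<le> ennreal e * ennreal (a * (dist (S i t y) ystar)\<^sup>2 + b) + ennreal c"
            by (intro add_right_mono mult_left_mono J1(3)) auto
          also have "\<dots> = ennreal (e * (a * (dist (S i t y) ystar)\<^sup>2 + b) + c)"
            using e c J1 by (simp add: ennreal_plus ennreal_mult)
          also have "\<dots> \<le> ennreal (e * (q * W + K2 * exp (d * t)) + c)"
            by (intro ennreal_leI add_right_mono mult_left_mono) (use e mainb[OF t, of i y] in \<open>auto simp: W_def\<close>)
          also have "\<dots> = ennreal (indicator {..tau} t * (exp (- g * (tau - t)) * (q * W + K2 * exp (d * t)) + B - D * exp (- g * (tau - t))))"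
            using True by (simp add: e_def c_def algebra_simps)
          finally show ?thesis .
        qed
        define E1 where "E1 = exp (- g * tau)"
        define A1 where "A1 = (q * W - D) * lam * E1"
        define A2 where "A2 = B * lam"
        define A3 where "A3 = lam * K2 * E1"
        define h where "h t = A1 * exp (- (q * lam) * t) + A2 * exp (- lam * t) + A3 * exp (- d * t)" for t
        have hid: "lam * exp (- lam * t) * (exp (- g * (tau - t)) * (q * W + K2 * exp (d * t)) + B - D * exp (- g * (tau - t))) = h t" for t
        proof -
          have x1: "exp (- lam * t) * exp (- g * (tau - t)) = E1 * exp (- (q * lam) * t)"
            by (simp add: E1_def exp_add[symmetric] g_def algebra_simps)
          have arg: "(- lam * t + - g * (tau - t)) + d * t = - g * tau + - d * t"
            by (simp add: g_def d_def algebra_simps)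
          have "exp (- lam * t) * exp (- g * (tau - t)) * exp (d * t) = exp ((- lam * t + - g * (tau - t)) + d * t)"
            by (simp only: exp_add)
          also have "\<dots> = E1 * exp (- d * t)" unfolding arg E1_def by (simp only: exp_add)
          finally have x2: "exp (- lam * t) * exp (- g * (tau - t)) * exp (d * t) = E1 * exp (- d * t)" .
          have "lam * exp (- lam * t) * (exp (- g * (tau - t)) * (q * W + K2 * exp (d * t)) + B - D * exp (- g * (tau - t)))
             = lam * (q * W - D) * (exp (- lam * t) * exp (- g * (tau - t))) + lam * K2 * (exp (- lam * t) * exp (- g * (tau - t)) * exp (d * t)) + B * lam * exp (- lam * t)"
            by (simp add: algebra_simps)
          also have "\<dots> = h t" unfolding x2 unfolding x1 h_def A1_def A2_def A3_def by (simp add: algebra_simps)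
          finally show ?thesis .
        qed
        have hnn: "0 \<le> h t" if "t \<in> {0..tau}" for t
        proof -
          have "exp (- g * (tau - t)) \<le> 1" using that g by auto
          then have "D * exp (- g * (tau - t)) \<le> B" using B mult_left_mono[of "exp (- g * (tau - t))" 1 D] by simp
          then have "0 \<le> lam * exp (- lam * t) * (exp (- g * (tau - t)) * (q * W + K2 * exp (d * t)) + B - D * exp (- g * (tau - t)))"
          proof -
            have "0 \<le> exp (- g * (tau - t)) * (q * W + K2 * exp (d * t))"
              using q W0 K2 by (intro mult_nonneg_nonneg add_nonneg_nonneg) auto
            then show ?thesis using lam \<open>D * exp (- g * (tau - t)) \<le> B\<close> by (intro mult_nonneg_nonneg) auto
          qed
          then show ?thesis by (simp only: hid)
        qed
        have integrand: "ennreal (lam * exp (- lam * t)) * (\<integral>\<^sup>+ u. F ((u, j), t + s) \<partial>(J (S i t y))) * indicator {0..} t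
            \<le> ennreal (h t) * indicator {0..tau} t" for j t
        proof (cases "t \<ge> 0")
          case False then show ?thesis by simp
        next
          case True
          have "ennreal (lam * exp (- lam * t)) * (\<integral>\<^sup>+ u. F ((u, j), t + s) \<partial>(J (S i t y)))
              \<le> ennreal (lam * exp (- lam * t)) * ennreal (indicator {..tau} t * (exp (- g * (tau - t)) * (q * W + K2 * exp (d * t)) + B - D * exp (- g * (tau - t))))"
            by (intro mult_left_mono inner True) auto
          also have "\<dots> = ennreal (h t) * indicator {0..tau} t"
          proof (cases "t \<le> tau")
            case True2: True
            have "ennreal (lam * exp (- lam * t)) * ennreal (exp (- g * (tau - t)) * (q * W + K2 * exp (d * t)) + B - D * exp (- g * (tau - t)))
                = ennreal (lam * exp (- lam * t) * (exp (- g * (tau - t)) * (q * W + K2 * exp (d * t)) + B - D * exp (- g * (tau - t))))"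
              by (rule ennreal_mult'[symmetric]) (use lam in simp)
            then show ?thesis using True True2 hid[of t] by simp
          qed (simp)
          finally show ?thesis using True by simp
        qed
        define R where "R = A1 / (q * lam) * (1 - exp (- (q * lam) * tau)) + A2 / lam * (1 - exp (- lam * tau)) + A3 / d * (1 - exp (- d * tau))"
        have ftc: "(\<integral>\<^sup>+t. ennreal (h t) * indicator {0..tau} t \<partial>lborel) = ennreal R"
          unfolding h_def R_def
          by (rule ftc3) (use q lam d tau0 hnn in \<open>auto simp: h_def\<close>)
        have "Pbar \<pi> S J lam F z \<le> (\<Sum>j\<in>UNIV. ennreal (\<pi> i j) * ennreal R)"
          unfolding z Pbar_def prod.case
        proof (intro sum_mono mult_left_mono)
          fix j
          show "(\<integral>\<^sup>+t\<in>{0..}. ennreal (lam * exp (- lam * t)) * (\<integral>\<^sup>+ u. F ((u, j), t + s) \<partial>(J (S i t y))) \<partial>lborel) \<le> ennreal R"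
            unfolding ftc[symmetric] by (intro nn_integral_mono integrand)
        qed auto
        also have "\<dots> = ennreal R"
          using stoch by (simp add: sum_distrib_right[symmetric] sum_ennreal)
        finally have PF: "Pbar \<pi> S J lam F z \<le> ennreal R" .
        define E2 where "E2 = exp (- lam * tau)"
        define E3 where "E3 = exp (- d * tau)"
        define Ux where "Ux = exp (- lam * (t0 - s)) * W * indicator {0..t0} s"
        have UxE: "Ufun lam t0 ystar z = ennreal Ux" unfolding z Ufun_def Ux_def W_def by simp
        have FE: "F z = ennreal (E1 * W + B - D * E1)" unfolding z F_def E1_def W_def using tau0
          by (simp add: tau_def)
        have Ux0: "0 \<le> Ux" "Ux \<le> E2 * W" using W0
          by (auto simp: Ux_def E2_def tau_def split: split_indicator)
        have E21: "E2 \<le> E1" unfolding E1_def E2_def using tau0 q lam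
          by (simp add: g_def mult_right_mono)
        have E1pos: "0 \<le> E1" "E1 \<le> 1" using g tau0 by (auto simp: E1_def)
        have E3pos: "0 \<le> E3" by (simp add: E3_def)
        have Eq: "E1 * exp (- (q * lam) * tau) = E2"
          unfolding E1_def E2_def by (simp add: exp_add[symmetric] g_def algebra_simps)
        have a1: "A1 / (q * lam) = (W - B) * E1" using q lam by (simp add: A1_def D_def field_simps)
        have a2: "A2 / lam = B" using lam by (simp add: A2_def)
        have a3: "A3 / d = Kp * E1" using d by (simp add: A3_def Kp_def field_simps)
        have KpB: "Kp = (1 - q) * B" using q by (simp add: B_def)
        have Rf: "R = (W - B) * (E1 - E2) + B - B * E2 + Kp * E1 - Kp * E1 * E3"
        proof -
          have "R = (W - B) * (E1 - E1 * exp (- (q * lam) * tau)) + B * (1 - E2) + Kp * E1 * (1 - E3)"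
            unfolding R_def a1 a2 a3 E2_def E3_def by (simp add: algebra_simps)
          then show ?thesis unfolding Eq by (simp add: algebra_simps)
        qed
        have "E2 * W + R = E1 * W + B - D * E1 - Kp * E1 * E3"
          unfolding Rf D_def KpB by (simp add: algebra_simps)
        moreover have "0 \<le> Kp * E1 * E3" using Kp E1pos E3pos by simp
        ultimately have r1: "Ux + R \<le> E1 * W + B - D * E1" using Ux0 by linarith
        have "D * E1 \<le> B" using B E1pos mult_left_mono[of E1 1 D] by simp
        moreover have "E2 * W \<le> E1 * W" using E21 W0 by (rule mult_right_mono)
        ultimately have r2: "Ux \<le> E1 * W + B - D * E1" using Ux0 by linarith
        have "Ufun lam t0 ystar z + Pbar \<pi> S J lam F z \<le> ennreal Ux + ennreal R"
          unfolding UxE by (intro add_left_mono PF)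
        also have "\<dots> \<le> F z" unfolding FE by (rule ennreal_add_le_aux[OF Ux0(1) r2 r1])
        finally show ?thesis .
      qed
    qed
    have "(\<Sum>n. ((Pbar \<pi> S J lam) ^^ n) (Ufun lam t0 ystar) ((y, i), 0)) \<le> F ((y, i), 0)"
      by (rule suminf_le_const[OF summableI]) (rule partial_le[OF key])
    also have "F ((y, i), 0) \<le> ennreal (exp (- g * t0) * (dist y ystar)\<^sup>2 + B)"
    proof -
      have "F ((y, i), 0) = ennreal (exp (- g * t0) * (dist y ystar)\<^sup>2 + B - D * exp (- g * t0))"
        using t0 by (simp add: F_def)
      also have "\<dots> \<le> ennreal (exp (- g * t0) * (dist y ystar)\<^sup>2 + B)"
        by (rule ennreal_leI) (use B in simp)
      finally show ?thesis .
    qed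
    finally show "(\<Sum>n. ((Pbar \<pi> S J lam) ^^ n) (Ufun lam t0 ystar) ((y, i), 0))
        \<le> ennreal (exp (- g * t0) * (dist y ystar)\<^sup>2 + B)" .
  qed
qed
end
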